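(* Let $\overline{\Phi}\subseteq\Phi$ be a rank $2$ root subsystem with dihedral reflection group $\overline W\subseteq W$, and let $w\in W$, written uniquely as $w=\lfloor w\rfloor\,\overline w$ with $\overline w\in\overline W$, where $\lfloor w\rfloor$ is the minimal element of the coset $w\overline W$. Under the bijection $\overline W\to w\overline W$, $\overline v\mapsto\lfloor w\rfloor\overline v$, every edge of the graph on $w\overline W$ induced from $\mathrm{QB}(W)$ corresponds to an edge of $\mathrm{QB}(\overline W)$. In other words, if $w\xrightarrow{\alpha}ws_\alpha$ is an edge of $\mathrm{QB}(W)$ with $\alpha\in\overline{\Phi}^+$, then $\overline w\xrightarrow{\alpha}\overline w s_\alpha$ is an edge of $\mathrm{QB}(\overline W)$.
   Context: $\Phi$ is an irreducible (finite, crystallographic) root system with positive roots $\Phi^+$, simple roots, Weyl group $W$ and length function $\ell$; for $\alpha\in\Phi$, $\alpha^\vee=2\alpha/\langle\alpha,\alpha\rangle$ and $\mathrm{ht}(\alpha^\vee)$ is the sum of the coefficients of $\alpha^\vee$ in the basis of simple coroots. The quantum Bruhat graph $\mathrm{QB}(W)$ is the directed graph on $W$ with an edge $v\xrightarrow{\alpha}vs_\alpha$ ($\alpha\in\Phi^+$) whenever $\ell(vs_\alpha)=\ell(v)+1$ or $\ell(vs_\alpha)=\ell(v)-2\mathrm{ht}(\alpha^\vee)+1$. A rank 2 root subsystem is a subset $\overline\Phi\subseteq\Phi$ which is itself a root system of rank 2; $\overline\Phi^+:=\overline\Phi\cap\Phi^+$ with its own simple roots, $\overline W$ is the group generated by $s_\alpha$,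 $\alpha\in\overline\Phi$, viewed as a dihedral reflection group with its own length function $\overline\ell$ (w.r.t. the simple reflections of $\overline\Phi$) and coroot heights computed in $\overline\Phi^\vee$; $\mathrm{QB}(\overline W)$ is defined by the same rule using $\overline\Phi^+$, $\overline\ell$ and these heights. On a coset $w\overline W$ consider the partial order generated by the relations $v<vs_\alpha$ for $v\in w\overline W$, $\alpha\in\overline\Phi$, $\ell(vs_\alpha)>\ell(v)$; by a result of Brenti–Fomin–Postnikov this order has a unique minimal element $\lfloor w\rfloor$, and $\overline v\mapsto\lfloor w\rfloor\overline v$ is an isomorphism of posets from $\overline W$ (Bruhat order) to $w\overline W$. *)

theory Defs
  imports "HOL-Analysis.Analysis"
begin

definition coroot :: "'a::euclidean_space \<Rightarrow> 'a" where
  "coroot \<alpha> = (2 / (\<alpha> \<bullet> \<alpha>)) *\<^sub>R \<alpha>"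

definition refl :: "'a::euclidean_space \<Rightarrow> 'a \<Rightarrow> 'a" where
  "refl \<alpha> x = x - (x \<bullet> coroot \<alpha>) *\<^sub>R \<alpha>"

text \<open>(Finite, reduced, crystallographic) root system in its span.\<close>
definition root_system :: "'a::euclidean_space set \<Rightarrow> bool" where
  "root_system \<Phi> \<longleftrightarrow> finite \<Phi> \<and> \<Phi> \<noteq> {} \<and> 0 \<notin> \<Phi>
     \<and> (\<forall>\<alpha>\<in>\<Phi>. refl \<alpha> ` \<Phi> = \<Phi>)
     \<and> (\<forall>\<alpha>\<in>\<Phi>. \<forall>\<beta>\<in>\<Phi>. \<beta> \<bullet> coroot \<alpha> \<in> \<int>)
     \<and> (\<forall>\<alpha>\<in>\<Phi>. \<forall>c::real. c *\<^sub>R \<alpha> \<in> \<Phi> \<longrightarrow> c = 1 \<or> c = -1)"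

definition irreducible_rs :: "'a::euclidean_space set \<Rightarrow> bool" where
  "irreducible_rs \<Phi> \<longleftrightarrow> \<not> (\<exists>A B. A \<noteq> {} \<and> B \<noteq> {} \<and> A \<union> B = \<Phi> \<and> A \<inter> B = {}
        \<and> (\<forall>a\<in>A. \<forall>b\<in>B. a \<bullet> b = 0))"

definition rank_rs :: "'a::euclidean_space set \<Rightarrow> nat" where
  "rank_rs \<Phi> = dim (span \<Phi>)"

text \<open>A positive system is determined by a regular vector \<xi> (no root orthogonal to it).\<close>
definition regular :: "'a::euclidean_space set \<Rightarrow> 'a \<Rightarrow> bool" where
  "regular \<Phi> \<xi> \<longleftrightarrow> (\<forall>\<alpha>\<in>\<Phi>. \<xi> \<bullet> \<alpha> \<noteq> 0)"

definition pos :: "'a::euclidean_space set \<Rightarrow> 'a \<Rightarrow> 'a set" where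
  "pos \<Phi> \<xi> = {\<alpha>\<in>\<Phi>. \<xi> \<bullet> \<alpha> > 0}"

definition simple :: "'a::euclidean_space set \<Rightarrow> 'a \<Rightarrow> 'a set" where
  "simple \<Phi> \<xi> = {\<alpha>\<in>pos \<Phi> \<xi>. \<not> (\<exists>\<beta>\<in>pos \<Phi> \<xi>. \<exists>\<gamma>\<in>pos \<Phi> \<xi>. \<alpha> = \<beta> + \<gamma>)}"

definition prod_refl :: "'a::euclidean_space list \<Rightarrow> 'a \<Rightarrow> 'a" where
  "prod_refl xs = foldr (\<lambda>\<beta> f. refl \<beta> \<circ> f) xs id"

definition weyl :: "'a::euclidean_space set \<Rightarrow> ('a \<Rightarrow> 'a) set" where
  "weyl \<Phi> = {prod_refl xs | xs. set xs \<subseteq> \<Phi>}"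

definition len :: "'a::euclidean_space set \<Rightarrow> 'a \<Rightarrow> ('a \<Rightarrow> 'a) \<Rightarrow> nat" where
  "len \<Phi> \<xi> w = (LEAST n. \<exists>xs. length xs = n \<and> set xs \<subseteq> simple \<Phi> \<xi> \<and> w = prod_refl xs)"

definition cht :: "'a::euclidean_space set \<Rightarrow> 'a \<Rightarrow> 'a \<Rightarrow> real" where
  "cht \<Phi> \<xi> \<alpha> = (THE h. \<exists>c. coroot \<alpha> = (\<Sum>\<beta>\<in>simple \<Phi> \<xi>. c \<beta> *\<^sub>R coroot \<beta>)
                          \<and> h = (\<Sum>\<beta>\<in>simple \<Phi> \<xi>. c \<beta>))"

definition qb_edge :: "'a::euclidean_space set \<Rightarrow> 'a \<Rightarrow> ('a \<Rightarrow> 'a) \<Rightarrow> 'a \<Rightarrow> bool" where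
  "qb_edge \<Phi> \<xi> v \<alpha> \<longleftrightarrow> v \<in> weyl \<Phi> \<and> \<alpha> \<in> pos \<Phi> \<xi> \<and>
     (len \<Phi> \<xi> (v \<circ> refl \<alpha>) = len \<Phi> \<xi> v + 1 \<or>
      real (len \<Phi> \<xi> (v \<circ> refl \<alpha>)) = real (len \<Phi> \<xi> v) - 2 * cht \<Phi> \<xi> \<alpha> + 1)"

definition wcoset :: "('a \<Rightarrow> 'a) \<Rightarrow> ('a \<Rightarrow> 'a) set \<Rightarrow> ('a \<Rightarrow> 'a) set" where
  "wcoset w H = {w \<circ> x | x. x \<in> H}"

definition coset_rel :: "'a::euclidean_space set \<Rightarrow> 'a set \<Rightarrow> 'a \<Rightarrow> ('a \<Rightarrow> 'a)
     \<Rightarrow> (('a \<Rightarrow> 'a) \<times> ('a \<Rightarrow> 'a)) set" where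
  "coset_rel \<Phi> \<Phi>b \<xi> w = {(v, v \<circ> refl \<alpha>) | v \<alpha>. v \<in> wcoset w (weyl \<Phi>b) \<and> \<alpha> \<in> \<Phi>b
        \<and> len \<Phi> \<xi> (v \<circ> refl \<alpha>) > len \<Phi> \<xi> v}"

definition coset_minimal :: "'a::euclidean_space set \<Rightarrow> 'a set \<Rightarrow> 'a \<Rightarrow> ('a \<Rightarrow> 'a)
     \<Rightarrow> ('a \<Rightarrow> 'a) \<Rightarrow> bool" where
  "coset_minimal \<Phi> \<Phi>b \<xi> w u \<longleftrightarrow> u \<in> wcoset w (weyl \<Phi>b) \<and>
     (\<forall>v\<in>wcoset w (weyl \<Phi>b). (v, u) \<in> (coset_rel \<Phi> \<Phi>b \<xi> w)\<^sup>* \<longrightarrow> v = u)"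

end

theory Submission
  imports Defs
begin


lemma coroot_inner: "(\<alpha>::'a::euclidean_space) \<noteq> 0 \<Longrightarrow> \<alpha> \<bullet> coroot \<alpha> = 2"
  by (simp add: coroot_def)

lemma refl_self: "(\<alpha>::'a::euclidean_space) \<noteq> 0 \<Longrightarrow> refl \<alpha> \<alpha> = - \<alpha>"
  by (simp add: refl_def coroot_inner algebra_simps) (simp add: scaleR_2)

lemma refl_coroot: "(\<alpha>::'a::euclidean_space) \<noteq> 0 \<Longrightarrow> refl \<alpha> x \<bullet> coroot \<alpha> = - (x \<bullet> coroot \<alpha>)"
  by (simp add: refl_def inner_diff_left coroot_inner)

lemma refl_refl: "(\<alpha>::'a::euclidean_space) \<noteq> 0 \<Longrightarrow> refl \<alpha> (refl \<alpha> x) = x"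
proof -
  assume a: "\<alpha> \<noteq> 0"
  have "refl \<alpha> (refl \<alpha> x) = refl \<alpha> x - (refl \<alpha> x \<bullet> coroot \<alpha>) *\<^sub>R \<alpha>"
    by (rule refl_def)
  also have "\<dots> = refl \<alpha> x + (x \<bullet> coroot \<alpha>) *\<^sub>R \<alpha>" using a by (simp add: refl_coroot)
  also have "\<dots> = x" by (simp add: refl_def)
  finally show ?thesis .
qed

lemma refl_refl_comp: "(\<alpha>::'a::euclidean_space) \<noteq> 0 \<Longrightarrow> refl \<alpha> \<circ> refl \<alpha> = id"
  by (auto simp: refl_refl)

lemma linear_refl: "linear (refl (\<alpha>::'a::euclidean_space))"
  by (rule linearI) (auto simp: refl_def inner_add_left algebra_simps)

lemma refl_inner: "(\<alpha>::'a::euclidean_space) \<noteq> 0 \<Longrightarrow> refl \<alpha> x \<bullet> refl \<alpha> y = x \<bullet> y"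
  by (simp add: refl_def coroot_def inner_diff_left inner_diff_right algebra_simps inner_commute)

lemma refl_neg: "refl (- (\<alpha>::'a::euclidean_space)) = refl \<alpha>"
  by (auto simp: refl_def coroot_def fun_eq_iff)

lemma prod_refl_Nil[simp]: "prod_refl [] = id"
  by (simp add: prod_refl_def)

lemma prod_refl_Cons[simp]: "prod_refl (a # xs) = refl a \<circ> prod_refl xs"
  by (simp add: prod_refl_def)

lemma prod_refl_append: "prod_refl (xs @ ys) = prod_refl xs \<circ> prod_refl ys"
  by (induction xs) auto

lemma prod_refl_snoc: "prod_refl (xs @ [a]) = prod_refl xs \<circ> refl a"
  by (simp add: prod_refl_append)

lemma linear_prod_refl: "linear (prod_refl xs)"
proof (induction xs)
  case Nil show ?case by (simp, rule linearI, auto)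
next
  case (Cons a xs) then show ?case
    by (simp only: prod_refl_Cons) (rule linear_compose[OF _ linear_refl])
qed

lemma prod_refl_inner: "0 \<notin> set xs \<Longrightarrow> prod_refl xs x \<bullet> prod_refl xs y = x \<bullet> y"
  by (induction xs) (auto simp: refl_inner)

lemma prod_refl_rev: "0 \<notin> set xs \<Longrightarrow> prod_refl (rev xs) \<circ> prod_refl xs = id"
proof (induction xs)
  case Nil then show ?case by simp
next
  case (Cons a xs)
  have "prod_refl (rev (a#xs)) \<circ> prod_refl (a#xs) = prod_refl (rev xs) \<circ> (refl a \<circ> refl a) \<circ> prod_refl xs"
    by (simp add: prod_refl_snoc comp_assoc)
  also have "\<dots> = id" using Cons by (auto simp: fun_eq_iff refl_refl)
  finally show ?case .
qed

lemma prod_refl_rev': "0 \<notin> set xs \<Longrightarrow> prod_refl xs \<circ> prod_refl (rev xs) = id"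
  using prod_refl_rev[of "rev xs"] by simp

lemma conj_refl:
  fixes w :: "'a::euclidean_space \<Rightarrow> 'a"
  assumes "linear w" "\<And>x y. w x \<bullet> w y = x \<bullet> y" "\<alpha> \<noteq> 0"
  shows "w \<circ> refl \<alpha> = refl (w \<alpha>) \<circ> w"
proof
  fix x
  have "\<alpha> \<bullet> \<alpha> \<noteq> 0" using assms by simp
  have "w x \<bullet> coroot (w \<alpha>) = x \<bullet> coroot \<alpha>"
    by (simp add: coroot_def assms(2))
  moreover have "w (refl \<alpha> x) = w x - (x \<bullet> coroot \<alpha>) *\<^sub>R w \<alpha>"
    using assms(1) by (simp add: refl_def linear_diff linear_scale)
  ultimately show "(w \<circ> refl \<alpha>) x = (refl (w \<alpha>) \<circ> w) x"
    by (simp add: refl_def)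
qed



lemma card_invol:
  assumes "finite A" "finite B" "\<And>x. x \<in> A \<Longrightarrow> f x \<in> B" "\<And>y. y \<in> B \<Longrightarrow> f y \<in> A"
    "\<And>x. x \<in> A \<Longrightarrow> f (f x) = x" "\<And>y. y \<in> B \<Longrightarrow> f (f y) = y"
  shows "card A = card B"
proof (rule antisym)
  have "inj_on f A" by (metis assms(5) inj_onI)
  then show "card A \<le> card B" by (rule card_inj_on_le) (use assms in auto)
  have "inj_on f B" by (metis assms(6) inj_onI)
  then show "card B \<le> card A" by (rule card_inj_on_le) (use assms in auto)
qed

locale rs =
  fixes \<Phi> :: "'a::euclidean_space set" and \<xi> :: 'a
  assumes rsys: "root_system \<Phi>" and reg: "regular \<Phi> \<xi>"
begin

abbreviation "P \<equiv> pos \<Phi> \<xi>"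
abbreviation "S \<equiv> simple \<Phi> \<xi>"

lemma fin: "finite \<Phi>" using rsys by (simp add: root_system_def)
lemma nz: "\<gamma> \<in> \<Phi> \<Longrightarrow> \<gamma> \<noteq> 0" using rsys by (auto simp: root_system_def)
lemma rc: "\<alpha> \<in> \<Phi> \<Longrightarrow> \<gamma> \<in> \<Phi> \<Longrightarrow> refl \<alpha> \<gamma> \<in> \<Phi>"
  using rsys unfolding root_system_def by blast
lemma intg: "\<alpha> \<in> \<Phi> \<Longrightarrow> \<gamma> \<in> \<Phi> \<Longrightarrow> \<gamma> \<bullet> coroot \<alpha> \<in> \<int>"
  using rsys unfolding root_system_def by blast
lemma reduced: "\<alpha> \<in> \<Phi> \<Longrightarrow> c *\<^sub>R \<alpha> \<in> \<Phi> \<Longrightarrow> c = 1 \<or> c = -1"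
  using rsys unfolding root_system_def by blast
lemma negc: "\<gamma> \<in> \<Phi> \<Longrightarrow> - \<gamma> \<in> \<Phi>"
  using rc[of \<gamma> \<gamma>] refl_self[OF nz] by simp
lemma xi_nz: "\<gamma> \<in> \<Phi> \<Longrightarrow> \<xi> \<bullet> \<gamma> \<noteq> 0"
  using reg by (simp add: regular_def)
lemma P_iff: "\<gamma> \<in> P \<longleftrightarrow> \<gamma> \<in> \<Phi> \<and> \<xi> \<bullet> \<gamma> > 0"
  by (simp add: pos_def)
lemma finP: "finite P" using fin by (simp add: pos_def)
lemma S_P: "\<gamma> \<in> S \<Longrightarrow> \<gamma> \<in> P" by (simp add: simple_def)
lemma finS: "finite S" using finP by (rule rev_finite_subset) (auto simp: S_P)
lemma S_iff: "\<gamma> \<in> S \<longleftrightarrow> \<gamma> \<in> P \<and> \<not> (\<exists>\<beta>\<in>P. \<exists>\<delta>\<in>P. \<gamma> = \<beta> + \<delta>)"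
  by (simp add: simple_def)
lemma neg_pos: "\<gamma> \<in> \<Phi> \<Longrightarrow> \<gamma> \<notin> P \<Longrightarrow> - \<gamma> \<in> P"
  using negc xi_nz by (auto simp: P_iff) (metis inner_minus_right neg_0_less_iff_less not_less_iff_gr_or_eq)

definition good :: "('a \<Rightarrow> 'a) \<Rightarrow> bool" where
  "good w \<longleftrightarrow> linear w \<and> (\<forall>x y. w x \<bullet> w y = x \<bullet> y) \<and> (\<forall>\<gamma>\<in>\<Phi>. w \<gamma> \<in> \<Phi>)"

lemma good_prod: "set xs \<subseteq> \<Phi> \<Longrightarrow> good (prod_refl xs)"
  unfolding good_def
proof (intro conjI)
  assume a: "set xs \<subseteq> \<Phi>"
  show "linear (prod_refl xs)" by (rule linear_prod_refl)
  have "0 \<notin> set xs" using a nz by auto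
  then show "\<forall>x y. prod_refl xs x \<bullet> prod_refl xs y = x \<bullet> y" by (simp add: prod_refl_inner)
  show "\<forall>\<gamma>\<in>\<Phi>. prod_refl xs \<gamma> \<in> \<Phi>" using a by (induction xs) (auto intro: rc)
qed

lemma weyl_good: "w \<in> weyl \<Phi> \<Longrightarrow> good w"
  by (auto simp: weyl_def good_prod)

lemma good_lin: "good w \<Longrightarrow> linear w" by (simp add: good_def)
lemma good_in: "good w \<Longrightarrow> \<gamma> \<in> \<Phi> \<Longrightarrow> w \<gamma> \<in> \<Phi>" by (simp add: good_def)
lemma good_neg: "good w \<Longrightarrow> w (- x) = - w x" by (simp add: good_def linear_neg)

definition inv :: "('a \<Rightarrow> 'a) \<Rightarrow> 'a set" where
  "inv w = {\<gamma>\<in>P. \<xi> \<bullet> w \<gamma> < 0}"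
definition ninv :: "('a \<Rightarrow> 'a) \<Rightarrow> nat" where
  "ninv w = card (inv w)"
definition NN :: "'a \<Rightarrow> 'a set" where
  "NN \<alpha> = {\<gamma>\<in>P. \<xi> \<bullet> refl \<alpha> \<gamma> < 0}"
definition tau :: "'a \<Rightarrow> 'a \<Rightarrow> 'a" where
  "tau \<alpha> \<gamma> = - refl \<alpha> \<gamma>"

lemma refl_neg_arg: "refl \<alpha> (- x) = - refl \<alpha> x"
  by (simp add: linear_neg[OF linear_refl])

lemma tau_tau: "\<alpha> \<in> \<Phi> \<Longrightarrow> tau \<alpha> (tau \<alpha> \<gamma>) = \<gamma>"
  by (simp add: tau_def refl_neg_arg refl_refl nz)

lemma NN_sub: "NN \<alpha> \<subseteq> P" by (auto simp: NN_def)
lemma finNN: "finite (NN \<alpha>)" using finP by (simp add: NN_def)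

lemma tau_NN: assumes "\<alpha> \<in> \<Phi>" "\<gamma> \<in> NN \<alpha>" shows "tau \<alpha> \<gamma> \<in> NN \<alpha>"
proof -
  have g: "\<gamma> \<in> \<Phi>" "\<xi> \<bullet> \<gamma> > 0" "\<xi> \<bullet> refl \<alpha> \<gamma> < 0" using assms by (auto simp: NN_def P_iff)
  have "tau \<alpha> \<gamma> \<in> \<Phi>" using rc[OF assms(1) g(1)] negc by (simp add: tau_def)
  moreover have "refl \<alpha> (tau \<alpha> \<gamma>) = - \<gamma>" using assms nz by (simp add: tau_def refl_neg_arg refl_refl)
  ultimately show ?thesis using g by (auto simp: NN_def P_iff tau_def)
qed

lemma alpha_NN: "\<alpha> \<in> P \<Longrightarrow> \<alpha> \<in> NN \<alpha>"
  using nz by (auto simp: NN_def P_iff refl_self)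

lemma tau_alpha: "\<alpha> \<in> \<Phi> \<Longrightarrow> tau \<alpha> \<alpha> = \<alpha>"
  using nz by (simp add: tau_def refl_self)

lemma NN_coef_pos: assumes "\<alpha> \<in> P" "\<gamma> \<in> NN \<alpha>" shows "\<gamma> \<bullet> coroot \<alpha> > 0"
proof -
  have "\<xi> \<bullet> \<gamma> > 0" "\<xi> \<bullet> \<alpha> > 0" "\<xi> \<bullet> refl \<alpha> \<gamma> < 0" using assms by (auto simp: NN_def P_iff)
  then have "\<xi> \<bullet> \<gamma> - (\<gamma> \<bullet> coroot \<alpha>) * (\<xi> \<bullet> \<alpha>) < 0" by (simp add: refl_def inner_diff_right)
  then have "(\<gamma> \<bullet> coroot \<alpha>) * (\<xi> \<bullet> \<alpha>) > 0" using \<open>\<xi> \<bullet> \<gamma> > 0\<close> by linarith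
  then show ?thesis using \<open>\<xi> \<bullet> \<alpha> > 0\<close> by (simp add: zero_less_mult_iff)
qed

lemma NN_coef_ge1: assumes "\<alpha> \<in> P" "\<gamma> \<in> NN \<alpha>" shows "\<gamma> \<bullet> coroot \<alpha> \<ge> 1"
proof -
  have "\<gamma> \<bullet> coroot \<alpha> \<in> \<int>" using assms intg by (auto simp: NN_def P_iff)
  moreover have "\<gamma> \<bullet> coroot \<alpha> > 0" by (rule NN_coef_pos[OF assms])
  ultimately show ?thesis using Ints_nonzero_abs_ge1[of "\<gamma> \<bullet> coroot \<alpha>"] by auto
qed

lemma w_tau: assumes "good w" shows "w (tau \<alpha> \<gamma>) = (\<gamma> \<bullet> coroot \<alpha>) *\<^sub>R w \<alpha> - w \<gamma>"
proof -
  have "tau \<alpha> \<gamma> = (\<gamma> \<bullet> coroot \<alpha>) *\<^sub>R \<alpha> - \<gamma>" by (simp add: tau_def refl_def)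
  then show ?thesis using good_lin[OF assms] by (simp add: linear_diff linear_scale)
qed

lemma diff_formula:
  assumes w: "good w" and a: "\<alpha> \<in> P"
  shows "ninv (w \<circ> refl \<alpha>) + card {\<gamma>\<in>NN \<alpha>. \<xi> \<bullet> w \<gamma> < 0} = ninv w + card {\<gamma>\<in>NN \<alpha>. \<xi> \<bullet> w \<gamma> > 0}"
proof -
  have aP: "\<alpha> \<in> \<Phi>" using a by (simp add: P_iff)
  define B where "B = {\<gamma>\<in>P. \<xi> \<bullet> refl \<alpha> \<gamma> > 0}"
  have finB: "finite B" using finP by (simp add: B_def)
  have BN: "B \<inter> NN \<alpha> = {}" by (auto simp: B_def NN_def)
  have PBN: "\<And>\<gamma>. \<gamma> \<in> P \<Longrightarrow> \<gamma> \<in> B \<or> \<gamma> \<in> NN \<alpha>"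
  proof -
    fix \<gamma> assume "\<gamma> \<in> P"
    then have "refl \<alpha> \<gamma> \<in> \<Phi>" using rc aP by (auto simp: P_iff)
    then show "\<gamma> \<in> B \<or> \<gamma> \<in> NN \<alpha>" using xi_nz[of "refl \<alpha> \<gamma>"] \<open>\<gamma> \<in> P\<close>
      by (auto simp: B_def NN_def)
  qed
  have inv1: "inv w = {\<gamma>\<in>B. \<xi> \<bullet> w \<gamma> < 0} \<union> {\<gamma>\<in>NN \<alpha>. \<xi> \<bullet> w \<gamma> < 0}"
    using PBN by (auto simp: inv_def B_def NN_def)
  have inv2: "inv (w \<circ> refl \<alpha>) = {\<gamma>\<in>B. \<xi> \<bullet> w (refl \<alpha> \<gamma>) < 0} \<union> {\<gamma>\<in>NN \<alpha>. \<xi> \<bullet> w (refl \<alpha> \<gamma>) < 0}"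
    using PBN by (auto simp: inv_def B_def NN_def)
  have c1: "card {\<gamma>\<in>B. \<xi> \<bullet> w (refl \<alpha> \<gamma>) < 0} = card {\<gamma>\<in>B. \<xi> \<bullet> w \<gamma> < 0}"
  proof (rule card_invol[where f = "refl \<alpha>"])
    have rB: "\<And>\<gamma>. \<gamma> \<in> B \<Longrightarrow> refl \<alpha> \<gamma> \<in> B"
    proof -
      fix \<gamma> assume g: "\<gamma> \<in> B"
      then have "refl \<alpha> \<gamma> \<in> \<Phi>" using rc aP by (auto simp: B_def P_iff)
      then show "refl \<alpha> \<gamma> \<in> B" using g nz[OF aP] by (auto simp: B_def P_iff refl_refl)
    qed
    show "\<And>x. x \<in> {\<gamma> \<in> B. \<xi> \<bullet> w (refl \<alpha> \<gamma>) < 0} \<Longrightarrow> refl \<alpha> x \<in> {\<gamma> \<in> B. \<xi> \<bullet> w \<gamma> < 0}"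
      using rB by auto
    show "\<And>x. x \<in> {\<gamma> \<in> B. \<xi> \<bullet> w \<gamma> < 0} \<Longrightarrow> refl \<alpha> x \<in> {\<gamma> \<in> B. \<xi> \<bullet> w (refl \<alpha> \<gamma>) < 0}"
      using rB nz[OF aP] by (auto simp: refl_refl)
  qed (use finB nz[OF aP] refl_refl in auto)
  have c2: "card {\<gamma>\<in>NN \<alpha>. \<xi> \<bullet> w (refl \<alpha> \<gamma>) < 0} = card {\<gamma>\<in>NN \<alpha>. \<xi> \<bullet> w \<gamma> > 0}"
  proof (rule card_invol[where f = "tau \<alpha>"])
    have e: "\<And>\<gamma>. w (refl \<alpha> \<gamma>) = - w (tau \<alpha> \<gamma>)" using good_neg[OF w] by (simp add: tau_def)
    show "\<And>x. x \<in> {\<gamma> \<in> NN \<alpha>. \<xi> \<bullet> w (refl \<alpha> \<gamma>) < 0} \<Longrightarrow> tau \<alpha> x \<in> {\<gamma> \<in> NN \<alpha>. \<xi> \<bullet> w \<gamma> > 0}"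
      using tau_NN[OF aP] e by auto
    show "\<And>x. x \<in> {\<gamma> \<in> NN \<alpha>. \<xi> \<bullet> w \<gamma> > 0} \<Longrightarrow> tau \<alpha> x \<in> {\<gamma> \<in> NN \<alpha>. \<xi> \<bullet> w (refl \<alpha> \<gamma>) < 0}"
      using tau_NN[OF aP] e tau_tau[OF aP] by auto
  qed (use finNN tau_tau[OF aP] in auto)
  have "ninv (w \<circ> refl \<alpha>) = card {\<gamma>\<in>B. \<xi> \<bullet> w \<gamma> < 0} + card {\<gamma>\<in>NN \<alpha>. \<xi> \<bullet> w \<gamma> > 0}"
    unfolding ninv_def inv2 using finB finNN BN c1 c2 by (subst card_Un_disjoint) auto
  moreover have "ninv w = card {\<gamma>\<in>B. \<xi> \<bullet> w \<gamma> < 0} + card {\<gamma>\<in>NN \<alpha>. \<xi> \<bullet> w \<gamma> < 0}"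
    unfolding ninv_def inv1 using finB finNN BN by (subst card_Un_disjoint) auto
  ultimately show ?thesis by simp
qed

end


context rs begin

lemma pair_pos:
  assumes w: "good w" and a: "\<alpha> \<in> P" and wa: "\<xi> \<bullet> w \<alpha> > 0"
    and X: "X \<subseteq> NN \<alpha>" "\<And>\<gamma>. \<gamma> \<in> X \<Longrightarrow> tau \<alpha> \<gamma> \<in> X"
  shows "card {\<gamma>\<in>X. \<xi> \<bullet> w \<gamma> < 0} \<le> card {\<gamma>\<in>X - {\<alpha>}. \<xi> \<bullet> w \<gamma> > 0}"
proof (rule card_inj_on_le[where f = "tau \<alpha>"])
  have aP: "\<alpha> \<in> \<Phi>" using a by (simp add: P_iff)
  show "inj_on (tau \<alpha>) {\<gamma> \<in> X. \<xi> \<bullet> w \<gamma> < 0}" by (metis (no_types, lifting) inj_onI tau_tau[OF aP])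
  show "finite {\<gamma> \<in> X - {\<alpha>}. 0 < \<xi> \<bullet> w \<gamma>}" using finite_subset[OF X(1) finNN] by auto
  show "tau \<alpha> ` {\<gamma> \<in> X. \<xi> \<bullet> w \<gamma> < 0} \<subseteq> {\<gamma> \<in> X - {\<alpha>}. 0 < \<xi> \<bullet> w \<gamma>}"
  proof
    fix y assume "y \<in> tau \<alpha> ` {\<gamma> \<in> X. \<xi> \<bullet> w \<gamma> < 0}"
    then obtain \<gamma> where g: "\<gamma> \<in> X" "\<xi> \<bullet> w \<gamma> < 0" "y = tau \<alpha> \<gamma>" by auto
    have k: "\<gamma> \<bullet> coroot \<alpha> > 0" using NN_coef_pos[OF a] X g by auto
    have "\<xi> \<bullet> w y = (\<gamma> \<bullet> coroot \<alpha>) * (\<xi> \<bullet> w \<alpha>) - \<xi> \<bullet> w \<gamma>"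
      using g(3) w_tau[OF w] by (simp add: inner_diff_right)
    moreover have "(\<gamma> \<bullet> coroot \<alpha>) * (\<xi> \<bullet> w \<alpha>) > 0" using k wa by simp
    ultimately have "\<xi> \<bullet> w y > 0" using g(2) by linarith
    moreover have "y \<noteq> \<alpha>" using g tau_tau[OF aP, of \<gamma>] tau_alpha[OF aP] wa by auto
    ultimately show "y \<in> {\<gamma> \<in> X - {\<alpha>}. 0 < \<xi> \<bullet> w \<gamma>}" using X(2) g by auto
  qed
qed

lemma pair_neg:
  assumes w: "good w" and a: "\<alpha> \<in> P" and wa: "\<xi> \<bullet> w \<alpha> < 0"
    and X: "X \<subseteq> NN \<alpha>" "\<And>\<gamma>. \<gamma> \<in> X \<Longrightarrow> tau \<alpha> \<gamma> \<in> X"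
  shows "card {\<gamma>\<in>X. \<xi> \<bullet> w \<gamma> > 0} \<le> card {\<gamma>\<in>X - {\<alpha>}. \<xi> \<bullet> w \<gamma> < 0}"
proof (rule card_inj_on_le[where f = "tau \<alpha>"])
  have aP: "\<alpha> \<in> \<Phi>" using a by (simp add: P_iff)
  show "inj_on (tau \<alpha>) {\<gamma> \<in> X. \<xi> \<bullet> w \<gamma> > 0}" by (metis (no_types, lifting) inj_onI tau_tau[OF aP])
  show "finite {\<gamma> \<in> X - {\<alpha>}. \<xi> \<bullet> w \<gamma> < 0}" using finite_subset[OF X(1) finNN] by auto
  show "tau \<alpha> ` {\<gamma> \<in> X. \<xi> \<bullet> w \<gamma> > 0} \<subseteq> {\<gamma> \<in> X - {\<alpha>}. \<xi> \<bullet> w \<gamma> < 0}"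
  proof
    fix y assume "y \<in> tau \<alpha> ` {\<gamma> \<in> X. \<xi> \<bullet> w \<gamma> > 0}"
    then obtain \<gamma> where g: "\<gamma> \<in> X" "\<xi> \<bullet> w \<gamma> > 0" "y = tau \<alpha> \<gamma>" by auto
    have k: "\<gamma> \<bullet> coroot \<alpha> > 0" using NN_coef_pos[OF a] X g by auto
    have "\<xi> \<bullet> w y = (\<gamma> \<bullet> coroot \<alpha>) * (\<xi> \<bullet> w \<alpha>) - \<xi> \<bullet> w \<gamma>"
      using g(3) w_tau[OF w] by (simp add: inner_diff_right)
    moreover have "(\<gamma> \<bullet> coroot \<alpha>) * (\<xi> \<bullet> w \<alpha>) < 0" using k wa by (simp add: mult_pos_neg)
    ultimately have "\<xi> \<bullet> w y < 0" using g(2) by linarith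
    moreover have "y \<noteq> \<alpha>" using g tau_tau[OF aP, of \<gamma>] tau_alpha[OF aP] wa by auto
    ultimately show "y \<in> {\<gamma> \<in> X - {\<alpha>}. \<xi> \<bullet> w \<gamma> < 0}" using X(2) g by auto
  qed
qed

lemma pos_comb: "\<gamma> \<in> P \<Longrightarrow> \<exists>c. (\<forall>\<delta>\<in>S. c \<delta> \<ge> 0) \<and> \<gamma> = (\<Sum>\<delta>\<in>S. c \<delta> *\<^sub>R \<delta>)"
proof (induction "card {\<beta>\<in>P. \<xi> \<bullet> \<beta> < \<xi> \<bullet> \<gamma>}" arbitrary: \<gamma> rule: less_induct)
  case less
  show ?case
  proof (cases "\<gamma> \<in> S")
    case True
    have "(\<Sum>\<delta>\<in>S. (if \<delta> = \<gamma> then 1 else 0) *\<^sub>R \<delta>) = (\<Sum>\<delta>\<in>S. if \<delta> = \<gamma> then \<delta> else 0)"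
      by (rule sum.cong) auto
    also have "\<dots> = \<gamma>" using True finS by (simp add: sum.delta')
    finally show ?thesis
      by (intro exI[of _ "\<lambda>\<delta>. if \<delta> = \<gamma> then 1 else 0"]) auto
  next
    case False
    then obtain \<beta> \<delta> where bd: "\<beta> \<in> P" "\<delta> \<in> P" "\<gamma> = \<beta> + \<delta>" using less.prems S_iff by auto
    have lt: "\<And>\<beta> \<delta>. \<beta> \<in> P \<Longrightarrow> \<delta> \<in> P \<Longrightarrow> \<gamma> = \<beta> + \<delta> \<Longrightarrow>
        card {\<beta>'\<in>P. \<xi> \<bullet> \<beta>' < \<xi> \<bullet> \<beta>} < card {\<beta>'\<in>P. \<xi> \<bullet> \<beta>' < \<xi> \<bullet> \<gamma>}"
    proof -
      fix \<beta> \<delta> assume h: "\<beta> \<in> P" "\<delta> \<in> P" "\<gamma> = \<beta> + \<delta>"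
      then have "\<xi> \<bullet> \<beta> < \<xi> \<bullet> \<gamma>" by (simp add: P_iff inner_add_right)
      then have "{\<beta>'\<in>P. \<xi> \<bullet> \<beta>' < \<xi> \<bullet> \<beta>} \<subset> {\<beta>'\<in>P. \<xi> \<bullet> \<beta>' < \<xi> \<bullet> \<gamma>}" using h by auto
      then show "card {\<beta>'\<in>P. \<xi> \<bullet> \<beta>' < \<xi> \<bullet> \<beta>} < card {\<beta>'\<in>P. \<xi> \<bullet> \<beta>' < \<xi> \<bullet> \<gamma>}"
        by (rule psubset_card_mono[rotated]) (use finP in auto)
    qed
    obtain c1 where c1: "\<forall>\<delta>\<in>S. c1 \<delta> \<ge> 0" "\<beta> = (\<Sum>\<delta>\<in>S. c1 \<delta> *\<^sub>R \<delta>)"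
      using less.hyps[OF lt[OF bd] bd(1)] by blast
    obtain c2 where c2: "\<forall>\<delta>\<in>S. c2 \<delta> \<ge> 0" "\<delta> = (\<Sum>\<delta>\<in>S. c2 \<delta> *\<^sub>R \<delta>)"
      using less.hyps[OF lt[of \<delta> \<beta>] bd(2)] bd by (auto simp: add.commute)
    show ?thesis
      by (rule exI[of _ "\<lambda>x. c1 x + c2 x"]) (use c1 c2 bd(3) in \<open>auto simp: scaleR_add_left sum.distrib\<close>)
  qed
qed

lemma S_diff_notin: assumes "\<beta> \<in> S" "\<gamma> \<in> S" "\<beta> - \<gamma> \<in> \<Phi>" shows False
proof (cases "\<beta> - \<gamma> \<in> P")
  case True
  then show False using assms S_iff S_P[OF assms(2)] by (metis diff_add_cancel)
next
  case False
  then have "\<gamma> - \<beta> \<in> P" using neg_pos[OF assms(3)] by simp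
  then show False using assms S_iff S_P[OF assms(1)] by (metis diff_add_cancel)
qed

lemma S_inner: assumes b: "\<beta> \<in> S" and g: "\<gamma> \<in> S" and ne: "\<beta> \<noteq> \<gamma>" shows "\<beta> \<bullet> \<gamma> \<le> 0"
proof (rule ccontr)
  assume "\<not> \<beta> \<bullet> \<gamma> \<le> 0"
  then have pos: "\<beta> \<bullet> \<gamma> > 0" by simp
  have bP: "\<beta> \<in> \<Phi>" "\<xi> \<bullet> \<beta> > 0" and gP: "\<gamma> \<in> \<Phi>" "\<xi> \<bullet> \<gamma> > 0" using S_P b g by (auto simp: P_iff)
  have b0: "\<beta> \<noteq> 0" and g0: "\<gamma> \<noteq> 0" using nz bP gP by auto
  have strict: "\<bar>\<beta> \<bullet> \<gamma>\<bar> < norm \<beta> * norm \<gamma>"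
  proof -
    have "\<bar>\<beta> \<bullet> \<gamma>\<bar> \<le> norm \<beta> * norm \<gamma>" by (rule Cauchy_Schwarz_ineq2)
    moreover have "\<bar>\<beta> \<bullet> \<gamma>\<bar> \<noteq> norm \<beta> * norm \<gamma>"
    proof
      assume "\<bar>\<beta> \<bullet> \<gamma>\<bar> = norm \<beta> * norm \<gamma>"
      then have "norm \<beta> *\<^sub>R \<gamma> = norm \<gamma> *\<^sub>R \<beta> \<or> norm \<beta> *\<^sub>R \<gamma> = - norm \<gamma> *\<^sub>R \<beta>"
        by (simp add: norm_cauchy_schwarz_abs_eq)
      then obtain c where c: "\<gamma> = c *\<^sub>R \<beta>" using b0
        by (metis norm_eq_zero scaleR_scaleR field_class.field_inverse scaleR_one)
      then have "c = 1 \<or> c = -1" using reduced[OF bP(1)] gP by simp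
      then show False using c ne gP bP by auto
    qed
    ultimately show ?thesis by simp
  qed
  have sq: "(\<beta> \<bullet> \<gamma>) * (\<beta> \<bullet> \<gamma>) < (\<beta> \<bullet> \<beta>) * (\<gamma> \<bullet> \<gamma>)"
  proof -
    have "(\<beta> \<bullet> \<gamma>) * (\<beta> \<bullet> \<gamma>) < (norm \<beta> * norm \<gamma>) * (norm \<beta> * norm \<gamma>)"
      using strict pos by (simp add: mult_strict_mono)
    also have "\<dots> = (\<beta> \<bullet> \<beta>) * (\<gamma> \<bullet> \<gamma>)" by (simp add: power2_norm_eq_inner[symmetric] power2_eq_square)
    finally show ?thesis .
  qed
  define a where "a = \<beta> \<bullet> coroot \<gamma>"
  define bb where "bb = \<gamma> \<bullet> coroot \<beta>"
  have bbp: "\<beta> \<bullet> \<beta> > 0" "\<gamma> \<bullet> \<gamma> > 0" using b0 g0 by auto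
  have ap: "a > 0" using pos bbp by (simp add: a_def coroot_def)
  have bp: "bb > 0" using pos bbp by (simp add: bb_def coroot_def inner_commute)
  have ab: "a * bb < 4"
  proof -
    have "a * bb = 4 * ((\<beta> \<bullet> \<gamma>) * (\<beta> \<bullet> \<gamma>)) / ((\<beta> \<bullet> \<beta>) * (\<gamma> \<bullet> \<gamma>))"
      by (simp add: a_def bb_def coroot_def inner_commute)
    also have "\<dots> < 4" using sq bbp by (simp add: divide_less_eq)
    finally show ?thesis .
  qed
  obtain ia where ia: "a = of_int ia" using intg[OF gP(1) bP(1)] a_def Ints_cases by blast
  obtain ib where ib: "bb = of_int ib" using intg[OF bP(1) gP(1)] bb_def Ints_cases by blast
  have "ia \<ge> 1" "ib \<ge> 1" using ap bp ia ib by auto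
  moreover have "ia * ib < 4" using ab ia ib by (metis of_int_less_iff of_int_mult of_int_numeral)
  ultimately have "ia = 1 \<or> ib = 1"
  proof -
    assume h: "1 \<le> ia" "1 \<le> ib" "ia * ib < 4"
    show ?thesis
    proof (rule ccontr)
      assume "\<not> (ia = 1 \<or> ib = 1)"
      then have "ia \<ge> 2" "ib \<ge> 2" using h by auto
      then have "ia * ib \<ge> 2 * 2" by (intro mult_mono) auto
      then show False using h by simp
    qed
  qed
  then show False
  proof
    assume "ia = 1"
    then have "refl \<gamma> \<beta> = \<beta> - \<gamma>" using ia by (simp add: refl_def a_def)
    then show False using rc[OF gP(1) bP(1)] S_diff_notin[OF b g] by simp
  next
    assume "ib = 1"
    then have "refl \<beta> \<gamma> = \<gamma> - \<beta>" using ib by (simp add: refl_def bb_def)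
    then show False using rc[OF bP(1) gP(1)] S_diff_notin[OF g b] by simp
  qed
qed

end


context rs begin

lemma S_indep: assumes "(\<Sum>\<delta>\<in>S. c \<delta> *\<^sub>R \<delta>) = 0" "\<delta>0 \<in> S" shows "c \<delta>0 = 0"
proof -
  define cp where "cp \<delta> = max (c \<delta>) 0" for \<delta>
  define cm where "cm \<delta> = max (- c \<delta>) 0" for \<delta>
  have cpm: "c \<delta> = cp \<delta> - cm \<delta>" for \<delta> by (simp add: cp_def cm_def)
  define v where "v = (\<Sum>\<delta>\<in>S. cp \<delta> *\<^sub>R \<delta>)"
  define u where "u = (\<Sum>\<delta>\<in>S. cm \<delta> *\<^sub>R \<delta>)"
  have "v - u = (\<Sum>\<delta>\<in>S. c \<delta> *\<^sub>R \<delta>)"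
    by (simp add: v_def u_def cpm scaleR_diff_left sum_subtractf)
  then have vu: "v = u" using assms by simp
  have "v \<bullet> u = (\<Sum>\<epsilon>\<in>S. \<Sum>\<delta>\<in>S. cp \<delta> * cm \<epsilon> * (\<delta> \<bullet> \<epsilon>))"
    by (simp add: v_def u_def inner_sum_left inner_sum_right sum_distrib_left mult.assoc mult.left_commute)
  also have "\<dots> \<le> 0"
  proof (intro sum_nonpos)
    fix \<epsilon> \<delta> assume d: "\<epsilon> \<in> S" "\<delta> \<in> S"
    show "cp \<delta> * cm \<epsilon> * (\<delta> \<bullet> \<epsilon>) \<le> 0"
    proof (cases "\<delta> = \<epsilon>")
      case True then show ?thesis by (simp add: cp_def cm_def max_def)
    next
      case False
      then have "\<delta> \<bullet> \<epsilon> \<le> 0" using S_inner d by simp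
      moreover have "cp \<delta> * cm \<epsilon> \<ge> 0" by (simp add: cp_def cm_def)
      ultimately show ?thesis by (simp add: mult_nonneg_nonpos)
    qed
  qed
  finally have "u \<bullet> u \<le> 0" using vu by simp
  then have u0: "u = 0" by (metis antisym inner_ge_zero inner_eq_zero_iff)
  then have "v = 0" using vu by simp
  have Spos: "\<And>\<delta>. \<delta> \<in> S \<Longrightarrow> \<xi> \<bullet> \<delta> > 0" using S_P by (simp add: P_iff)
  have "(\<Sum>\<delta>\<in>S. cp \<delta> * (\<xi> \<bullet> \<delta>)) = \<xi> \<bullet> v" by (simp add: v_def inner_sum_right)
  then have "(\<Sum>\<delta>\<in>S. cp \<delta> * (\<xi> \<bullet> \<delta>)) = 0" using \<open>v = 0\<close> by simp
  then have "cp \<delta>0 * (\<xi> \<bullet> \<delta>0) = 0"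
    using sum_nonneg_eq_0_iff[OF finS, of "\<lambda>\<delta>. cp \<delta> * (\<xi> \<bullet> \<delta>)"] Spos assms(2)
    by (auto simp: cp_def less_imp_le)
  then have p: "cp \<delta>0 = 0" using Spos[OF assms(2)] by simp
  have "(\<Sum>\<delta>\<in>S. cm \<delta> * (\<xi> \<bullet> \<delta>)) = \<xi> \<bullet> u" by (simp add: u_def inner_sum_right)
  then have "(\<Sum>\<delta>\<in>S. cm \<delta> * (\<xi> \<bullet> \<delta>)) = 0" using u0 by simp
  then have "cm \<delta>0 * (\<xi> \<bullet> \<delta>0) = 0"
    using sum_nonneg_eq_0_iff[OF finS, of "\<lambda>\<delta>. cm \<delta> * (\<xi> \<bullet> \<delta>)"] Spos assms(2)
    by (auto simp: cm_def less_imp_le)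
  then have "cm \<delta>0 = 0" using Spos[OF assms(2)] by simp
  then show ?thesis using p cpm by simp
qed

lemma refl_S_pos: assumes b: "\<beta> \<in> S" and g: "\<gamma> \<in> P" and ne: "\<gamma> \<noteq> \<beta>"
  shows "refl \<beta> \<gamma> \<in> P"
proof (rule ccontr)
  assume nP: "refl \<beta> \<gamma> \<notin> P"
  have bP: "\<beta> \<in> \<Phi>" "\<xi> \<bullet> \<beta> > 0" using S_P b by (auto simp: P_iff)
  have gP: "\<gamma> \<in> \<Phi>" "\<xi> \<bullet> \<gamma> > 0" using g by (auto simp: P_iff)
  have "- refl \<beta> \<gamma> \<in> P" using neg_pos[OF rc[OF bP(1) gP(1)] nP] .
  then obtain d where d: "\<forall>\<delta>\<in>S. d \<delta> \<ge> 0" "- refl \<beta> \<gamma> = (\<Sum>\<delta>\<in>S. d \<delta> *\<^sub>R \<delta>)" using pos_comb by blast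
  obtain c where c: "\<forall>\<delta>\<in>S. c \<delta> \<ge> 0" "\<gamma> = (\<Sum>\<delta>\<in>S. c \<delta> *\<^sub>R \<delta>)" using pos_comb g by blast
  define k where "k = \<gamma> \<bullet> coroot \<beta>"
  define e where "e \<delta> = c \<delta> + d \<delta> - (if \<delta> = \<beta> then k else 0)" for \<delta>
  have kb: "k *\<^sub>R \<beta> = (\<Sum>\<delta>\<in>S. (if \<delta> = \<beta> then k else 0) *\<^sub>R \<delta>)"
  proof -
    have "(\<Sum>\<delta>\<in>S. (if \<delta> = \<beta> then k else 0) *\<^sub>R \<delta>) = (\<Sum>\<delta>\<in>S. if \<delta> = \<beta> then k *\<^sub>R \<beta> else 0)"
      by (rule sum.cong) auto
    then show ?thesis using b finS by (simp add: sum.delta')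
  qed
  have "(\<Sum>\<delta>\<in>S. e \<delta> *\<^sub>R \<delta>) = (\<Sum>\<delta>\<in>S. c \<delta> *\<^sub>R \<delta>) + (\<Sum>\<delta>\<in>S. d \<delta> *\<^sub>R \<delta>) - (\<Sum>\<delta>\<in>S. (if \<delta> = \<beta> then k else 0) *\<^sub>R \<delta>)"
    by (simp add: e_def scaleR_add_left scaleR_diff_left sum.distrib sum_subtractf)
  also have "\<dots> = \<gamma> + (- refl \<beta> \<gamma>) - k *\<^sub>R \<beta>"
    by (simp only: c(2)[symmetric] d(2)[symmetric] kb[symmetric])
  also have "\<dots> = 0" by (simp add: refl_def k_def)
  finally have e0: "\<And>\<delta>. \<delta> \<in> S \<Longrightarrow> e \<delta> = 0" using S_indep by blast
  have c0: "\<And>\<delta>. \<delta> \<in> S \<Longrightarrow> \<delta> \<noteq> \<beta> \<Longrightarrow> c \<delta> = 0"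
  proof -
    fix \<delta> assume "\<delta> \<in> S" "\<delta> \<noteq> \<beta>"
    then have "c \<delta> + d \<delta> = 0" using e0[of \<delta>] by (simp add: e_def)
    then show "c \<delta> = 0" using c(1) d(1) \<open>\<delta> \<in> S\<close> by (meson add_nonneg_eq_0_iff)
  qed
  have "\<gamma> = (\<Sum>\<delta>\<in>S. if \<delta> = \<beta> then c \<beta> *\<^sub>R \<beta> else 0)"
    unfolding c(2) by (rule sum.cong) (auto simp: c0)
  then have "\<gamma> = c \<beta> *\<^sub>R \<beta>" using b finS by (simp add: sum.delta')
  then have "c \<beta> = 1 \<or> c \<beta> = -1" using reduced[OF bP(1)] gP(1) by simp
  then show False using \<open>\<gamma> = c \<beta> *\<^sub>R \<beta>\<close> ne gP bP by auto
qed

lemma NN_S: "\<beta> \<in> S \<Longrightarrow> NN \<beta> = {\<beta>}"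
  using refl_S_pos alpha_NN S_P by (fastforce simp: NN_def P_iff)

lemma ninv_simple:
  assumes "good w" "\<beta> \<in> S"
  shows "ninv (w \<circ> refl \<beta>) + (if \<xi> \<bullet> w \<beta> < 0 then 1 else 0) = ninv w + (if \<xi> \<bullet> w \<beta> > 0 then 1 else 0)"
  using diff_formula[OF assms(1) S_P[OF assms(2)]] NN_S[OF assms(2)]
  by (auto split: if_splits simp: Collect_conv_if)

lemma S_Phi: "set xs \<subseteq> S \<Longrightarrow> set xs \<subseteq> \<Phi>" using S_P by (auto simp: P_iff)

lemma L_lower: "set xs \<subseteq> S \<Longrightarrow> ninv (prod_refl xs) \<le> length xs"
proof (induction xs rule: rev_induct)
  case Nil
  have "inv (\<lambda>a. a) = {}" by (auto simp: inv_def P_iff)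
  then show ?case by (simp add: ninv_def)
next
  case (snoc x xs)
  have g: "good (prod_refl xs)" using snoc S_Phi by (auto intro: good_prod)
  have "ninv (prod_refl xs \<circ> refl x) \<le> ninv (prod_refl xs) + 1"
    using ninv_simple[OF g, of x] snoc by (auto split: if_splits)
  moreover have "set xs \<subseteq> S" using snoc.prems by simp
  ultimately have "ninv (prod_refl xs \<circ> refl x) \<le> length xs + 1" using snoc.IH by linarith
  then show ?case by (metis prod_refl_snoc length_append_singleton Suc_eq_plus1)
qed

lemma exch:
  assumes "set ys \<subseteq> S" "\<beta> \<in> S" "\<xi> \<bullet> prod_refl ys \<beta> < 0"
  shows "\<exists>zs. set zs \<subseteq> S \<and> length zs < length ys \<and> prod_refl ys \<circ> refl \<beta> = prod_refl zs"
  using assms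
proof (induction ys)
  case Nil then show ?case using S_P[of \<beta>] by (simp add: P_iff)
next
  case (Cons y ys)
  let ?v = "prod_refl ys"
  have gv: "good ?v" using Cons.prems S_Phi by (auto intro: good_prod)
  have bP: "\<beta> \<in> \<Phi>" using S_P Cons.prems by (auto simp: P_iff)
  show ?case
  proof (cases "\<xi> \<bullet> ?v \<beta> < 0")
    case True
    then obtain zs where zs: "set zs \<subseteq> S" "length zs < length ys" "?v \<circ> refl \<beta> = prod_refl zs"
    proof -
      have "set ys \<subseteq> S" using Cons.prems(1) by simp
      then show ?thesis using Cons.IH[OF _ Cons.prems(2) True] that by blast
    qed
    have "prod_refl (y # ys) \<circ> refl \<beta> = prod_refl (y # zs)"
      by (metis prod_refl_Cons comp_assoc zs(3))
    then show ?thesis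
    proof (intro exI[of _ "y # zs"] conjI)
      show "set (y#zs) \<subseteq> S" using zs Cons.prems by simp
      show "length (y#zs) < length (y#ys)" using zs by simp
    qed
  next
    case False
    have vb: "?v \<beta> \<in> \<Phi>" using good_in[OF gv bP] .
    then have "\<xi> \<bullet> ?v \<beta> > 0" using False xi_nz[OF vb] by linarith
    then have vbP: "?v \<beta> \<in> P" using vb by (simp add: P_iff)
    have yS: "y \<in> S" using Cons.prems by simp
    have "refl y (?v \<beta>) \<notin> P" using Cons.prems(3) by (simp add: P_iff)
    then have vby: "?v \<beta> = y" using refl_S_pos[OF yS vbP] by blast
    have conj: "?v \<circ> refl \<beta> = refl y \<circ> ?v"
      using conj_refl[of ?v \<beta>] gv nz[OF bP] vby by (simp add: good_def)
    have y0: "y \<noteq> 0" using nz S_P yS by (auto simp: P_iff)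
    have "prod_refl (y # ys) \<circ> refl \<beta> = refl y \<circ> (refl y \<circ> ?v)"
      by (simp add: comp_assoc conj)
    also have "\<dots> = ?v" using y0 by (simp add: fun_eq_iff refl_refl)
    finally show ?thesis
    proof (intro exI[of _ ys] conjI)
      show "set ys \<subseteq> S" using Cons.prems by simp
    qed simp
  qed
qed

end


context rs begin

definition ws :: "('a \<Rightarrow> 'a) \<Rightarrow> bool" where
  "ws w \<longleftrightarrow> (\<exists>xs. set xs \<subseteq> S \<and> w = prod_refl xs)"

lemma len_le: "set xs \<subseteq> S \<Longrightarrow> len \<Phi> \<xi> (prod_refl xs) \<le> length xs"
  unfolding len_def by (rule Least_le) blast

lemma len_wit: "ws w \<Longrightarrow> \<exists>xs. set xs \<subseteq> S \<and> w = prod_refl xs \<and> length xs = len \<Phi> \<xi> w"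
  unfolding ws_def len_def
  by (rule LeastI2_ex) auto

lemma ws_good: "ws w \<Longrightarrow> good w" using S_Phi good_prod by (auto simp: ws_def)

lemma len_upper_aux: "ws w \<Longrightarrow> len \<Phi> \<xi> w = n \<Longrightarrow> n \<le> ninv w"
proof (induction n arbitrary: w)
  case 0 then show ?case by simp
next
  case (Suc m)
  obtain xs where xs: "set xs \<subseteq> S" "w = prod_refl xs" "length xs = Suc m" using len_wit[OF Suc.prems(1)] Suc.prems(2) by auto
  obtain ys \<beta> where ysb: "xs = ys @ [\<beta>]" using xs(3) by (metis length_Suc_conv_rev)
  have ysS: "set ys \<subseteq> S" and bS: "\<beta> \<in> S" using xs ysb by auto
  let ?v = "prod_refl ys"
  have wv: "w = ?v \<circ> refl \<beta>" using xs ysb by (simp add: prod_refl_snoc)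
  have wsv: "ws ?v" using ysS by (auto simp: ws_def)
  have lv1: "len \<Phi> \<xi> ?v \<le> m" using len_le[OF ysS] xs ysb by simp
  obtain zs where zs: "set zs \<subseteq> S" "?v = prod_refl zs" "length zs = len \<Phi> \<xi> ?v" using len_wit[OF wsv] by auto
  have "w = prod_refl (zs @ [\<beta>])" using wv zs by (simp add: prod_refl_snoc)
  then have "len \<Phi> \<xi> w \<le> len \<Phi> \<xi> ?v + 1" using len_le[of "zs @ [\<beta>]"] zs bS by simp
  then have lv: "len \<Phi> \<xi> ?v = m" using lv1 Suc.prems by simp
  have IH: "m \<le> ninv ?v" using Suc.IH[OF wsv lv] .
  have gv: "good ?v" using ws_good[OF wsv] .
  have bP: "\<beta> \<in> \<Phi>" using S_P bS by (simp add: P_iff)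
  have vb: "?v \<beta> \<in> \<Phi>" using good_in[OF gv bP] .
  show ?case
  proof (cases "\<xi> \<bullet> ?v \<beta> < 0")
    case True
    obtain us where us: "set us \<subseteq> S" "length us < length ys" "?v \<circ> refl \<beta> = prod_refl us"
      using exch[OF ysS bS True] by blast
    have "len \<Phi> \<xi> w \<le> length us" using len_le[OF us(1)] us(3) wv by simp
    then show ?thesis using us(2) xs(3) ysb Suc.prems(2) by simp
  next
    case False
    then have "\<xi> \<bullet> ?v \<beta> > 0" using xi_nz[OF vb] by linarith
    then have "ninv w = ninv ?v + 1" using ninv_simple[OF gv bS] wv by simp
    then show ?thesis using IH by simp
  qed
qed

lemma len_ws: "ws w \<Longrightarrow> len \<Phi> \<xi> w = ninv w"
proof -
  assume w: "ws w"
  obtain xs where xs: "set xs \<subseteq> S" "w = prod_refl xs" "length xs = len \<Phi> \<xi> w" using len_wit[OF w] by auto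
  have "ninv w \<le> len \<Phi> \<xi> w" using L_lower[OF xs(1)] xs by simp
  moreover have "len \<Phi> \<xi> w \<le> ninv w" using len_upper_aux[OF w refl] .
  ultimately show ?thesis by simp
qed

lemma ws_comp: "ws v \<Longrightarrow> ws w \<Longrightarrow> ws (v \<circ> w)"
  unfolding ws_def by (metis prod_refl_append set_append le_sup_iff)

lemma ws_refl_S: "\<beta> \<in> S \<Longrightarrow> ws (refl \<beta>)"
  unfolding ws_def by (rule exI[of _ "[\<beta>]"]) auto

lemma conj_S: "\<alpha> \<in> P \<Longrightarrow> \<exists>xs \<beta>. set xs \<subseteq> S \<and> \<beta> \<in> S \<and> prod_refl xs \<beta> = \<alpha>"
proof (induction "card {\<beta>\<in>P. \<xi> \<bullet> \<beta> < \<xi> \<bullet> \<alpha>}" arbitrary: \<alpha> rule: less_induct)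
  case less
  show ?case
  proof (cases "\<alpha> \<in> S")
    case True then show ?thesis by (intro exI[of _ "[]"] exI[of _ \<alpha>]) auto
  next
    case False
    have aP: "\<alpha> \<in> \<Phi>" "\<xi> \<bullet> \<alpha> > 0" using less.prems by (auto simp: P_iff)
    have "\<exists>\<beta>\<in>S. \<alpha> \<bullet> \<beta> > 0"
    proof (rule ccontr)
      assume "\<not> (\<exists>\<beta>\<in>S. \<alpha> \<bullet> \<beta> > 0)"
      then have le: "\<And>\<beta>. \<beta> \<in> S \<Longrightarrow> \<alpha> \<bullet> \<beta> \<le> 0" by (simp add: not_less)
      obtain c where c: "\<forall>\<delta>\<in>S. c \<delta> \<ge> 0" "\<alpha> = (\<Sum>\<delta>\<in>S. c \<delta> *\<^sub>R \<delta>)" using pos_comb less.prems by blast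
      have "\<alpha> \<bullet> \<alpha> = (\<Sum>\<delta>\<in>S. c \<delta> * (\<alpha> \<bullet> \<delta>))"
        by (subst (2) c(2)) (simp add: inner_sum_right)
      also have "\<dots> \<le> 0" using c(1) le by (intro sum_nonpos) (simp add: mult_nonneg_nonpos)
      finally have "\<alpha> = 0" by (metis antisym inner_ge_zero inner_eq_zero_iff)
      then show False using nz aP by simp
    qed
    then obtain \<beta> where bS: "\<beta> \<in> S" and ab: "\<alpha> \<bullet> \<beta> > 0" by blast
    have bP: "\<beta> \<in> \<Phi>" "\<xi> \<bullet> \<beta> > 0" using S_P bS by (auto simp: P_iff)
    have b0: "\<beta> \<noteq> 0" using nz bP by simp
    have ne: "\<alpha> \<noteq> \<beta>" using False bS by auto
    have rP: "refl \<beta> \<alpha> \<in> P" using refl_S_pos[OF bS less.prems ne] .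
    have k: "\<alpha> \<bullet> coroot \<beta> > 0" using ab b0 by (simp add: coroot_def)
    have "\<xi> \<bullet> refl \<beta> \<alpha> = \<xi> \<bullet> \<alpha> - (\<alpha> \<bullet> coroot \<beta>) * (\<xi> \<bullet> \<beta>)" by (simp add: refl_def inner_diff_right)
    moreover have "(\<alpha> \<bullet> coroot \<beta>) * (\<xi> \<bullet> \<beta>) > 0" using k bP by simp
    ultimately have lt: "\<xi> \<bullet> refl \<beta> \<alpha> < \<xi> \<bullet> \<alpha>" by linarith
    then have "{\<beta>'\<in>P. \<xi> \<bullet> \<beta>' < \<xi> \<bullet> refl \<beta> \<alpha>} \<subset> {\<beta>'\<in>P. \<xi> \<bullet> \<beta>' < \<xi> \<bullet> \<alpha>}" using rP by auto
    then have "card {\<beta>'\<in>P. \<xi> \<bullet> \<beta>' < \<xi> \<bullet> refl \<beta> \<alpha>} < card {\<beta>'\<in>P. \<xi> \<bullet> \<beta>' < \<xi> \<bullet> \<alpha>}"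
      by (rule psubset_card_mono[rotated]) (use finP in auto)
    then obtain xs \<beta>' where xs: "set xs \<subseteq> S" "\<beta>' \<in> S" "prod_refl xs \<beta>' = refl \<beta> \<alpha>"
      using less.hyps[OF _ rP] by blast
    have "prod_refl (\<beta> # xs) \<beta>' = \<alpha>" using xs(3) b0 by (simp add: refl_refl)
    then show ?thesis using xs bS by (intro exI[of _ "\<beta> # xs"] exI[of _ \<beta>']) auto
  qed
qed

lemma ws_refl: assumes a: "\<alpha> \<in> \<Phi>" shows "ws (refl \<alpha>)"
proof -
  have main: "ws (refl \<gamma>)" if g: "\<gamma> \<in> P" for \<gamma>
  proof -
    obtain xs \<beta> where xs: "set xs \<subseteq> S" "\<beta> \<in> S" "prod_refl xs \<beta> = \<gamma>" using conj_S[OF g] by blast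
    let ?w = "prod_refl xs"
    have gw: "good ?w" using ws_good xs(1) by (auto simp: ws_def)
    have b0: "\<beta> \<noteq> 0" using nz S_P xs(2) by (auto simp: P_iff)
    have c: "?w \<circ> refl \<beta> = refl \<gamma> \<circ> ?w" using conj_refl[of ?w \<beta>] gw b0 xs(3) by (simp add: good_def)
    have x0: "0 \<notin> set xs" using xs(1) nz S_Phi by blast
    have "refl \<gamma> = refl \<gamma> \<circ> (?w \<circ> prod_refl (rev xs))" using prod_refl_rev'[OF x0] by simp
    also have "\<dots> = ?w \<circ> refl \<beta> \<circ> prod_refl (rev xs)" by (simp add: c comp_assoc)
    finally have e: "refl \<gamma> = ?w \<circ> refl \<beta> \<circ> prod_refl (rev xs)" .
    have w1: "ws ?w" using xs(1) unfolding ws_def by blast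
    have w2: "ws (prod_refl (rev xs))" using xs(1) unfolding ws_def by (intro exI[of _ "rev xs"]) simp
    show ?thesis unfolding e
      by (intro ws_comp ws_refl_S xs(2) w1 w2)
  qed
  show ?thesis
  proof (cases "\<alpha> \<in> P")
    case True then show ?thesis by (rule main)
  next
    case False
    then have "- \<alpha> \<in> P" using neg_pos[OF a] by simp
    then show ?thesis using main refl_neg by metis
  qed
qed

lemma weyl_ws: "w \<in> weyl \<Phi> \<Longrightarrow> ws w"
proof -
  assume "w \<in> weyl \<Phi>"
  then obtain xs where xs: "set xs \<subseteq> \<Phi>" "w = prod_refl xs" by (auto simp: weyl_def)
  have "ws (prod_refl xs)" using xs(1)
  proof (induction xs)
    case Nil then show ?case unfolding ws_def by (intro exI[of _ "[]"]) simp
  next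
    case (Cons a xs)
    then show ?case by (simp only: prod_refl_Cons) (intro ws_comp ws_refl, auto)
  qed
  then show ?thesis using xs by simp
qed

lemma len_weyl: "w \<in> weyl \<Phi> \<Longrightarrow> len \<Phi> \<xi> w = ninv w"
  using len_ws weyl_ws by blast

end


lemma invol_sum_zero:
  fixes g :: "'b \<Rightarrow> real"
  assumes "finite A" "\<And>x. x \<in> A \<Longrightarrow> f x \<in> A" "\<And>x. x \<in> A \<Longrightarrow> f (f x) = x"
    "\<And>x. x \<in> A \<Longrightarrow> g (f x) = - g x"
  shows "(\<Sum>x\<in>A. g x) = 0"
proof -
  have b: "bij_betw f A A" by (rule bij_betw_byWitness[of A f f]) (use assms in auto)
  have "(\<Sum>x\<in>A. g x) = (\<Sum>x\<in>A. g (f x))" using sum.reindex_bij_betw[OF b, of g] by simp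
  also have "\<dots> = - (\<Sum>x\<in>A. g x)" using assms(4) by (simp add: sum_negf)
  finally show ?thesis by simp
qed

context rs begin

definition rho2 :: 'a where "rho2 = (\<Sum>\<gamma>\<in>P. \<gamma>)"

lemma rho_S: assumes b: "\<beta> \<in> S" shows "rho2 \<bullet> coroot \<beta> = 2"
proof -
  have bP: "\<beta> \<in> P" using S_P b .
  have b0: "\<beta> \<noteq> 0" using nz bP by (simp add: P_iff)
  have "rho2 \<bullet> coroot \<beta> = (\<Sum>\<gamma>\<in>P. \<gamma> \<bullet> coroot \<beta>)" by (simp add: rho2_def inner_sum_left)
  also have "\<dots> = \<beta> \<bullet> coroot \<beta> + (\<Sum>\<gamma>\<in>P - {\<beta>}. \<gamma> \<bullet> coroot \<beta>)"
    using finP bP by (simp add: sum.remove)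
  also have "(\<Sum>\<gamma>\<in>P - {\<beta>}. \<gamma> \<bullet> coroot \<beta>) = 0"
  proof (rule invol_sum_zero[where f = "refl \<beta>"])
    show "finite (P - {\<beta>})" using finP by simp
    fix x assume x: "x \<in> P - {\<beta>}"
    have "refl \<beta> x \<in> P" using refl_S_pos[OF b] x by auto
    moreover have "refl \<beta> x \<noteq> \<beta>"
    proof
      assume "refl \<beta> x = \<beta>"
      then have "x = - \<beta>" using b0 by (metis refl_refl refl_self)
      then show False using x bP by (auto simp: P_iff)
    qed
    ultimately show "refl \<beta> x \<in> P - {\<beta>}" by simp
    show "refl \<beta> (refl \<beta> x) = x" using b0 by (simp add: refl_refl)
    show "refl \<beta> x \<bullet> coroot \<beta> = - (x \<bullet> coroot \<beta>)" using b0 by (simp add: refl_coroot)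
  qed
  finally show ?thesis using b0 by (simp add: coroot_inner)
qed

lemma NN_sum: assumes a: "\<alpha> \<in> P" shows "(\<Sum>\<gamma>\<in>NN \<alpha>. \<gamma> \<bullet> coroot \<alpha>) = rho2 \<bullet> coroot \<alpha>"
proof -
  have aP: "\<alpha> \<in> \<Phi>" using a by (simp add: P_iff)
  have a0: "\<alpha> \<noteq> 0" using nz aP by simp
  define B where "B = {\<gamma>\<in>P. \<xi> \<bullet> refl \<alpha> \<gamma> > 0}"
  have finB: "finite B" using finP by (simp add: B_def)
  have PBN: "P = B \<union> NN \<alpha>"
  proof -
    have "\<And>\<gamma>. \<gamma> \<in> P \<Longrightarrow> \<gamma> \<in> B \<or> \<gamma> \<in> NN \<alpha>"
    proof -
      fix \<gamma> assume "\<gamma> \<in> P"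
      then have "refl \<alpha> \<gamma> \<in> \<Phi>" using rc aP by (auto simp: P_iff)
      then show "\<gamma> \<in> B \<or> \<gamma> \<in> NN \<alpha>" using xi_nz[of "refl \<alpha> \<gamma>"] \<open>\<gamma> \<in> P\<close>
        by (auto simp: B_def NN_def)
    qed
    then show ?thesis by (auto simp: B_def NN_def)
  qed
  have BN: "B \<inter> NN \<alpha> = {}" by (auto simp: B_def NN_def)
  have "rho2 \<bullet> coroot \<alpha> = (\<Sum>\<gamma>\<in>P. \<gamma> \<bullet> coroot \<alpha>)" by (simp add: rho2_def inner_sum_left)
  also have "\<dots> = (\<Sum>\<gamma>\<in>B. \<gamma> \<bullet> coroot \<alpha>) + (\<Sum>\<gamma>\<in>NN \<alpha>. \<gamma> \<bullet> coroot \<alpha>)"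
    unfolding PBN using finB finNN BN by (rule sum.union_disjoint)
  also have "(\<Sum>\<gamma>\<in>B. \<gamma> \<bullet> coroot \<alpha>) = 0"
  proof (rule invol_sum_zero[where f = "refl \<alpha>"])
    show "finite B" by (rule finB)
    fix x assume x: "x \<in> B"
    then have "refl \<alpha> x \<in> \<Phi>" using rc aP by (auto simp: B_def P_iff)
    then show "refl \<alpha> x \<in> B" using x a0 by (auto simp: B_def P_iff refl_refl)
    show "refl \<alpha> (refl \<alpha> x) = x" using a0 by (simp add: refl_refl)
    show "refl \<alpha> x \<bullet> coroot \<alpha> = - (x \<bullet> coroot \<alpha>)" using a0 by (simp add: refl_coroot)
  qed
  finally show ?thesis by simp
qed

lemma cht_eq: assumes a: "\<alpha> \<in> P" shows "cht \<Phi> \<xi> \<alpha> = rho2 \<bullet> coroot \<alpha> / 2"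
proof -
  have aP: "\<alpha> \<in> \<Phi>" using a by (simp add: P_iff)
  have a0: "\<alpha> \<noteq> 0" using nz aP by simp
  have uniq: "(\<Sum>\<beta>\<in>S. c \<beta>) = rho2 \<bullet> coroot \<alpha> / 2" if c: "coroot \<alpha> = (\<Sum>\<beta>\<in>S. c \<beta> *\<^sub>R coroot \<beta>)" for c
  proof -
    have "rho2 \<bullet> coroot \<alpha> = (\<Sum>\<beta>\<in>S. c \<beta> * (rho2 \<bullet> coroot \<beta>))" by (subst c) (simp add: inner_sum_right)
    also have "\<dots> = (\<Sum>\<beta>\<in>S. c \<beta> * 2)" by (rule sum.cong) (auto simp: rho_S)
    finally show ?thesis by (simp add: sum_distrib_right[symmetric])
  qed
  obtain a' where a': "\<forall>\<delta>\<in>S. a' \<delta> \<ge> 0" "\<alpha> = (\<Sum>\<delta>\<in>S. a' \<delta> *\<^sub>R \<delta>)" using pos_comb a by blast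
  define c where "c \<delta> = a' \<delta> * (\<delta> \<bullet> \<delta>) / (\<alpha> \<bullet> \<alpha>)" for \<delta>
  have ex: "coroot \<alpha> = (\<Sum>\<beta>\<in>S. c \<beta> *\<^sub>R coroot \<beta>)"
  proof -
    have "(\<Sum>\<beta>\<in>S. c \<beta> *\<^sub>R coroot \<beta>) = (\<Sum>\<beta>\<in>S. (2 / (\<alpha> \<bullet> \<alpha>)) *\<^sub>R (a' \<beta> *\<^sub>R \<beta>))"
    proof (rule sum.cong[OF refl])
      fix \<beta> assume "\<beta> \<in> S"
      then have "\<beta> \<bullet> \<beta> \<noteq> 0" using nz S_P by (auto simp: P_iff)
      then show "c \<beta> *\<^sub>R coroot \<beta> = (2 / (\<alpha> \<bullet> \<alpha>)) *\<^sub>R (a' \<beta> *\<^sub>R \<beta>)"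
        by (simp add: c_def coroot_def)
    qed
    also have "\<dots> = (2 / (\<alpha> \<bullet> \<alpha>)) *\<^sub>R \<alpha>" by (subst (2) a'(2)) (simp add: scaleR_sum_right)
    finally show ?thesis by (simp add: coroot_def)
  qed
  show ?thesis unfolding cht_def
  proof (rule the_equality)
    show "\<exists>c. coroot \<alpha> = (\<Sum>\<beta>\<in>S. c \<beta> *\<^sub>R coroot \<beta>) \<and> rho2 \<bullet> coroot \<alpha> / 2 = (\<Sum>\<beta>\<in>S. c \<beta>)"
      using ex uniq by metis
    show "\<And>h. \<exists>c. coroot \<alpha> = (\<Sum>\<beta>\<in>S. c \<beta> *\<^sub>R coroot \<beta>) \<and> h = (\<Sum>\<beta>\<in>S. c \<beta>) \<Longrightarrow> h = rho2 \<bullet> coroot \<alpha> / 2"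
      using uniq by metis
  qed
qed

lemma NN_cht: "\<alpha> \<in> P \<Longrightarrow> (\<Sum>\<gamma>\<in>NN \<alpha>. \<gamma> \<bullet> coroot \<alpha>) = 2 * cht \<Phi> \<xi> \<alpha>"
  by (simp add: NN_sum cht_eq)

lemma NN_excess: assumes a: "\<alpha> \<in> P"
  shows "(\<Sum>\<gamma>\<in>NN \<alpha> - {\<alpha>}. \<gamma> \<bullet> coroot \<alpha> - 1) = 2 * cht \<Phi> \<xi> \<alpha> - real (card (NN \<alpha>)) - 1"
proof -
  have a0: "\<alpha> \<noteq> 0" using nz a by (simp add: P_iff)
  have "(\<Sum>\<gamma>\<in>NN \<alpha>. \<gamma> \<bullet> coroot \<alpha> - 1) = 2 * cht \<Phi> \<xi> \<alpha> - real (card (NN \<alpha>))"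
    by (simp add: sum_subtractf NN_cht[OF a])
  moreover have "(\<Sum>\<gamma>\<in>NN \<alpha>. \<gamma> \<bullet> coroot \<alpha> - 1) = (\<alpha> \<bullet> coroot \<alpha> - 1) + (\<Sum>\<gamma>\<in>NN \<alpha> - {\<alpha>}. \<gamma> \<bullet> coroot \<alpha> - 1)"
    using finNN alpha_NN[OF a] by (simp add: sum.remove)
  ultimately show ?thesis using coroot_inner[OF a0] by simp
qed

lemma NN_excess_nonneg: "\<alpha> \<in> P \<Longrightarrow> \<gamma> \<in> NN \<alpha> \<Longrightarrow> \<gamma> \<bullet> coroot \<alpha> - 1 \<ge> 0"
  using NN_coef_ge1 by simp

end


lemma card_split_sub:
  assumes "finite X"
  shows "card {x\<in>X. p x} = card {x\<in>X \<inter> Y. p x} + card {x\<in>X - Y. p x}"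
proof -
  have "{x\<in>X. p x} = {x\<in>X \<inter> Y. p x} \<union> {x\<in>X - Y. p x}" by auto
  moreover have "card ({x\<in>X \<inter> Y. p x} \<union> {x\<in>X - Y. p x}) = card {x\<in>X \<inter> Y. p x} + card {x\<in>X - Y. p x}"
    by (rule card_Un_disjoint) (use assms in auto)
  ultimately show ?thesis by simp
qed

context rs begin

lemma card_sign_split:
  assumes "good w" "X \<subseteq> \<Phi>"
  shows "card X = card {\<gamma>\<in>X. \<xi> \<bullet> w \<gamma> < 0} + card {\<gamma>\<in>X. \<xi> \<bullet> w \<gamma> > 0}"
proof -
  have fX: "finite X" using assms(2) fin finite_subset by blast
  have "X = {\<gamma>\<in>X. \<xi> \<bullet> w \<gamma> < 0} \<union> {\<gamma>\<in>X. \<xi> \<bullet> w \<gamma> > 0}"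
    using assms xi_nz good_in by (force simp: not_less_iff_gr_or_eq)
  then have "card X = card ({\<gamma>\<in>X. \<xi> \<bullet> w \<gamma> < 0} \<union> {\<gamma>\<in>X. \<xi> \<bullet> w \<gamma> > 0})" by simp
  also have "\<dots> = card {\<gamma>\<in>X. \<xi> \<bullet> w \<gamma> < 0} + card {\<gamma>\<in>X. \<xi> \<bullet> w \<gamma> > 0}"
    by (rule card_Un_disjoint) (use fX in auto)
  finally show ?thesis .
qed

lemma weyl_comp: "v \<in> weyl \<Phi> \<Longrightarrow> x \<in> weyl \<Phi> \<Longrightarrow> v \<circ> x \<in> weyl \<Phi>"
  unfolding weyl_def by (auto simp: prod_refl_append[symmetric]) (metis le_sup_iff set_append)

lemma weyl_refl: "\<beta> \<in> \<Phi> \<Longrightarrow> refl \<beta> \<in> weyl \<Phi>"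
  unfolding weyl_def by (rule CollectI, rule exI[of _ "[\<beta>]"]) simp

lemma ninv_decrease:
  assumes u: "good u" and g: "\<gamma> \<in> P" and neg: "\<xi> \<bullet> u \<gamma> < 0"
  shows "ninv (u \<circ> refl \<gamma>) < ninv u"
proof -
  have d: "ninv (u \<circ> refl \<gamma>) + card {\<delta>\<in>NN \<gamma>. \<xi> \<bullet> u \<delta> < 0} = ninv u + card {\<delta>\<in>NN \<gamma>. \<xi> \<bullet> u \<delta> > 0}"
    by (rule diff_formula[OF u g])
  have "card {\<delta>\<in>NN \<gamma>. \<xi> \<bullet> u \<delta> > 0} \<le> card {\<delta>\<in>NN \<gamma> - {\<gamma>}. \<xi> \<bullet> u \<delta> < 0}"
    by (rule pair_neg[OF u g neg]) (auto intro: tau_NN simp: P_iff g[unfolded P_iff])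
  also have "{\<delta>\<in>NN \<gamma> - {\<gamma>}. \<xi> \<bullet> u \<delta> < 0} = {\<delta>\<in>NN \<gamma>. \<xi> \<bullet> u \<delta> < 0} - {\<gamma>}" by auto
  also have "card \<dots> < card {\<delta>\<in>NN \<gamma>. \<xi> \<bullet> u \<delta> < 0}"
    by (rule card_Diff1_less) (use finNN alpha_NN[OF g] neg in auto)
  finally show ?thesis using d by linarith
qed

end

theorem theorem5p3:
  fixes \<Phi> \<Phi>b :: "'a::euclidean_space set" and \<xi> :: 'a
    and w u wb :: "'a \<Rightarrow> 'a" and \<alpha> :: 'a
  assumes "root_system \<Phi>" and "irreducible_rs \<Phi>" and "regular \<Phi> \<xi>"
    and "\<Phi>b \<subseteq> \<Phi>" and "root_system \<Phi>b" and "rank_rs \<Phi>b = 2"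
    and "w \<in> weyl \<Phi>"
    and "coset_minimal \<Phi> \<Phi>b \<xi> w u"
    and "wb \<in> weyl \<Phi>b" and "w = u \<circ> wb"
    and "\<alpha> \<in> pos \<Phi>b \<xi>"
    and "qb_edge \<Phi> \<xi> w \<alpha>"
  shows "qb_edge \<Phi>b \<xi> wb \<alpha>"
proof -
  interpret R: rs \<Phi> \<xi> using assms(1,3) by unfold_locales
  have regb: "regular \<Phi>b \<xi>" using assms(3,4) by (auto simp: regular_def)
  interpret Rb: rs \<Phi>b \<xi> using assms(5) regb by unfold_locales
  have sub: "\<Phi>b \<subseteq> \<Phi>" by (rule assms(4))
  have posb: "pos \<Phi>b \<xi> = pos \<Phi> \<xi> \<inter> \<Phi>b" using sub by (auto simp: pos_def)
  have weyl_sub: "weyl \<Phi>b \<subseteq> weyl \<Phi>" using sub by (auto simp: weyl_def)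
  obtain x where x: "x \<in> weyl \<Phi>b" "u = w \<circ> x" using assms(8) by (auto simp: coset_minimal_def wcoset_def)
  have uW: "u \<in> weyl \<Phi>" using R.weyl_comp[OF assms(7)] x weyl_sub by auto
  have gu: "R.good u" using R.weyl_good[OF uW] .
  have upos: "\<xi> \<bullet> u \<gamma> > 0" if g: "\<gamma> \<in> pos \<Phi>b \<xi>" for \<gamma>
  proof (rule ccontr)
    assume "\<not> \<xi> \<bullet> u \<gamma> > 0"
    have gP: "\<gamma> \<in> pos \<Phi> \<xi>" using g posb by auto
    have gb: "\<gamma> \<in> \<Phi>b" using g by (simp add: pos_def)
    have gPhi: "\<gamma> \<in> \<Phi>" using gb sub by auto
    have "u \<gamma> \<in> \<Phi>" using R.good_in[OF gu gPhi] .
    then have neg: "\<xi> \<bullet> u \<gamma> < 0" using R.xi_nz \<open>\<not> \<xi> \<bullet> u \<gamma> > 0\<close> by (meson linorder_neqE_linordered_idom)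
    define v where "v = u \<circ> refl \<gamma>"
    have vW: "v \<in> weyl \<Phi>" unfolding v_def by (rule R.weyl_comp[OF uW R.weyl_refl[OF gPhi]])
    have lt: "R.ninv v < R.ninv u" unfolding v_def by (rule R.ninv_decrease[OF gu gP neg])
    have g0: "\<gamma> \<noteq> 0" using R.nz gPhi by simp
    have vu: "v \<circ> refl \<gamma> = u" unfolding v_def using refl_refl_comp[OF g0] by (simp add: comp_assoc)
    have xg: "x \<circ> refl \<gamma> \<in> weyl \<Phi>b" by (rule Rb.weyl_comp[OF x(1) Rb.weyl_refl[OF gb]])
    have vC: "v \<in> wcoset w (weyl \<Phi>b)" unfolding wcoset_def v_def using xg x(2)
      by (intro CollectI exI[of _ "x \<circ> refl \<gamma>"]) (simp add: comp_assoc)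
    have "len \<Phi> \<xi> v < len \<Phi> \<xi> (v \<circ> refl \<gamma>)"
      using lt vu R.len_weyl[OF vW] R.len_weyl[OF uW] by simp
    then have "(v, v \<circ> refl \<gamma>) \<in> coset_rel \<Phi> \<Phi>b \<xi> w"
      unfolding coset_rel_def using vC gb by blast
    then have "(v, u) \<in> (coset_rel \<Phi> \<Phi>b \<xi> w)\<^sup>*" using vu by auto
    then have "v = u" using assms(8) vC by (simp add: coset_minimal_def)
    then show False using lt by simp
  qed
  have gwb: "Rb.good wb" using Rb.weyl_good[OF assms(9)] .
  have gw: "R.good w" using R.weyl_good[OF assms(7)] .
  have ulin: "linear u" using gu by (simp add: R.good_def)
  have sgn: "(\<xi> \<bullet> w \<gamma> < 0 \<longleftrightarrow> \<xi> \<bullet> wb \<gamma> < 0) \<and> (\<xi> \<bullet> w \<gamma> > 0 \<longleftrightarrow> \<xi> \<bullet> wb \<gamma> > 0)"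
    if g: "\<gamma> \<in> \<Phi>b" for \<gamma>
  proof -
    have wbg: "wb \<gamma> \<in> \<Phi>b" using Rb.good_in[OF gwb g] .
    have wg: "w \<gamma> = u (wb \<gamma>)" using assms(10) by simp
    show ?thesis
    proof (cases "wb \<gamma> \<in> pos \<Phi>b \<xi>")
      case True
      then show ?thesis using upos[OF True] wg by (auto simp: pos_def)
    next
      case False
      then have n: "- wb \<gamma> \<in> pos \<Phi>b \<xi>" using Rb.neg_pos[OF wbg] by simp
      have "u (- wb \<gamma>) = - u (wb \<gamma>)" using ulin by (simp add: linear_neg)
      then have "\<xi> \<bullet> w \<gamma> < 0" using upos[OF n] wg by simp
      moreover have "\<xi> \<bullet> wb \<gamma> < 0" using n by (simp add: pos_def)
      ultimately show ?thesis by simp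
    qed
  qed
  have aPb: "\<alpha> \<in> pos \<Phi>b \<xi>" by (rule assms(11))
  have aP: "\<alpha> \<in> pos \<Phi> \<xi>" using aPb posb by auto
  have ab: "\<alpha> \<in> \<Phi>b" using aPb by (simp add: pos_def)
  define N where "N = R.NN \<alpha>"
  define Nb where "Nb = Rb.NN \<alpha>"
  have NbN: "Nb = N \<inter> \<Phi>b" by (auto simp: N_def Nb_def R.NN_def Rb.NN_def posb)
  have finN: "finite N" using R.finNN by (simp add: N_def)
  have NPhi: "N \<subseteq> \<Phi>" using R.NN_sub by (auto simp: N_def pos_def)
  have NbPhib: "Nb \<subseteq> \<Phi>b" using NbN by auto
  have NbPhi: "Nb \<subseteq> \<Phi>" using NbN NPhi by auto
  define nn where "nn = card {\<gamma>\<in>N. \<xi> \<bullet> w \<gamma> < 0}"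
  define np where "np = card {\<gamma>\<in>N. \<xi> \<bullet> w \<gamma> > 0}"
  define bn where "bn = card {\<gamma>\<in>Nb. \<xi> \<bullet> w \<gamma> < 0}"
  define bp where "bp = card {\<gamma>\<in>Nb. \<xi> \<bullet> w \<gamma> > 0}"
  have dR: "R.ninv (w \<circ> refl \<alpha>) + nn = R.ninv w + np"
    unfolding nn_def np_def N_def by (rule R.diff_formula[OF gw aP])
  have dRb: "Rb.ninv (wb \<circ> refl \<alpha>) + bn = Rb.ninv wb + bp"
  proof -
    have "{\<gamma>\<in>Nb. \<xi> \<bullet> wb \<gamma> < 0} = {\<gamma>\<in>Nb. \<xi> \<bullet> w \<gamma> < 0}" using sgn NbPhib by auto
    moreover have "{\<gamma>\<in>Nb. \<xi> \<bullet> wb \<gamma> > 0} = {\<gamma>\<in>Nb. \<xi> \<bullet> w \<gamma> > 0}" using sgn NbPhib by auto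
    ultimately show ?thesis using Rb.diff_formula[OF gwb aPb] by (simp add: bn_def bp_def Nb_def)
  qed
  have wbaW: "wb \<circ> refl \<alpha> \<in> weyl \<Phi>b" by (rule Rb.weyl_comp[OF assms(9) Rb.weyl_refl[OF ab]])
  have waW: "w \<circ> refl \<alpha> \<in> weyl \<Phi>" by (rule R.weyl_comp[OF assms(7) R.weyl_refl]) (use ab sub in auto)
  have lenR: "len \<Phi> \<xi> (w \<circ> refl \<alpha>) = R.ninv (w \<circ> refl \<alpha>)" "len \<Phi> \<xi> w = R.ninv w"
    using R.len_weyl waW assms(7) by auto
  have lenRb: "len \<Phi>b \<xi> (wb \<circ> refl \<alpha>) = Rb.ninv (wb \<circ> refl \<alpha>)" "len \<Phi>b \<xi> wb = Rb.ninv wb"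
    using Rb.len_weyl wbaW assms(9) by auto
  have aPhi: "\<alpha> \<in> \<Phi>" using ab sub by auto
  have tauN: "R.tau \<alpha> \<gamma> \<in> N" if "\<gamma> \<in> N" for \<gamma> using R.tau_NN[OF aPhi] that by (simp add: N_def)
  have tau_b: "R.tau \<alpha> \<gamma> \<in> \<Phi>b \<longleftrightarrow> \<gamma> \<in> \<Phi>b" for \<gamma>
  proof
    assume "\<gamma> \<in> \<Phi>b" then show "R.tau \<alpha> \<gamma> \<in> \<Phi>b" using Rb.rc[OF ab] Rb.negc by (simp add: R.tau_def)
  next
    assume "R.tau \<alpha> \<gamma> \<in> \<Phi>b"
    then have "R.tau \<alpha> (R.tau \<alpha> \<gamma>) \<in> \<Phi>b" using Rb.rc[OF ab] Rb.negc by (simp add: R.tau_def)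
    then show "\<gamma> \<in> \<Phi>b" using R.tau_tau[OF aPhi] by simp
  qed
  have aN: "\<alpha> \<in> Nb" using Rb.alpha_NN[OF aPb] by (simp add: Nb_def)
  from assms(12) consider (up) "len \<Phi> \<xi> (w \<circ> refl \<alpha>) = len \<Phi> \<xi> w + 1"
    | (qu) "real (len \<Phi> \<xi> (w \<circ> refl \<alpha>)) = real (len \<Phi> \<xi> w) - 2 * cht \<Phi> \<xi> \<alpha> + 1"
    unfolding qb_edge_def by blast
  then have "len \<Phi>b \<xi> (wb \<circ> refl \<alpha>) = len \<Phi>b \<xi> wb + 1 \<or>
      real (len \<Phi>b \<xi> (wb \<circ> refl \<alpha>)) = real (len \<Phi>b \<xi> wb) - 2 * cht \<Phi>b \<xi> \<alpha> + 1"
  proof cases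
    case up
    then have npnn: "np = nn + 1" using dR lenR by simp
    have wa: "\<xi> \<bullet> w \<alpha> > 0"
    proof (rule ccontr)
      assume "\<not> \<xi> \<bullet> w \<alpha> > 0"
      then have neg: "\<xi> \<bullet> w \<alpha> < 0" using R.xi_nz R.good_in[OF gw aPhi] by (meson linorder_neqE_linordered_idom)
      have "np \<le> card {\<gamma>\<in>N - {\<alpha>}. \<xi> \<bullet> w \<gamma> < 0}" unfolding np_def
        by (rule R.pair_neg[OF gw aP neg]) (use tauN in \<open>auto simp: N_def\<close>)
      also have "{\<gamma>\<in>N - {\<alpha>}. \<xi> \<bullet> w \<gamma> < 0} = {\<gamma>\<in>N. \<xi> \<bullet> w \<gamma> < 0} - {\<alpha>}" by auto
      also have "card \<dots> < nn" unfolding nn_def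
        by (rule card_Diff1_less) (use finN aN NbN neg in auto)
      finally show False using npnn by simp
    qed
    define M where "M = N - \<Phi>b"
    have h1: "card {\<gamma>\<in>M. \<xi> \<bullet> w \<gamma> < 0} \<le> card {\<gamma>\<in>M - {\<alpha>}. \<xi> \<bullet> w \<gamma> > 0}"
      by (rule R.pair_pos[OF gw aP wa]) (use tauN tau_b in \<open>auto simp: M_def N_def\<close>)
    have h1': "card {\<gamma>\<in>M - {\<alpha>}. \<xi> \<bullet> w \<gamma> > 0} \<le> card {\<gamma>\<in>M. \<xi> \<bullet> w \<gamma> > 0}"
      by (rule card_mono) (use finN in \<open>auto simp: M_def\<close>)
    have h2: "bn \<le> card {\<gamma>\<in>Nb - {\<alpha>}. \<xi> \<bullet> w \<gamma> > 0}" unfolding bn_def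
      by (rule R.pair_pos[OF gw aP wa]) (use tauN tau_b NbN in \<open>auto simp: N_def\<close>)
    have "{\<gamma>\<in>Nb - {\<alpha>}. \<xi> \<bullet> w \<gamma> > 0} = {\<gamma>\<in>Nb. \<xi> \<bullet> w \<gamma> > 0} - {\<alpha>}" by auto
    then have h2': "card {\<gamma>\<in>Nb - {\<alpha>}. \<xi> \<bullet> w \<gamma> > 0} = bp - 1"
      using aN wa unfolding bp_def by (simp add: card_Diff_singleton)
    have bp1: "bp \<ge> 1"
    proof -
      have "\<alpha> \<in> {\<gamma>\<in>Nb. \<xi> \<bullet> w \<gamma> > 0}" using aN wa by simp
      moreover have "finite {\<gamma>\<in>Nb. \<xi> \<bullet> w \<gamma> > 0}" using finN NbN by simp
      ultimately have "bp > 0" unfolding bp_def using card_gt_0_iff by blast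
      then show ?thesis by simp
    qed
    have sn: "nn = bn + card {\<gamma>\<in>M. \<xi> \<bullet> w \<gamma> < 0}" unfolding nn_def bn_def M_def NbN
      by (rule card_split_sub[OF finN])
    have sp: "np = bp + card {\<gamma>\<in>M. \<xi> \<bullet> w \<gamma> > 0}" unfolding np_def bp_def M_def NbN
      by (rule card_split_sub[OF finN])
    have "bp = bn + 1" using h1 h1' h2 h2' bp1 sn sp npnn by linarith
    then have "len \<Phi>b \<xi> (wb \<circ> refl \<alpha>) = len \<Phi>b \<xi> wb + 1" using dRb lenRb by simp
    then show ?thesis by simp
  next
    case qu
    define h where "h = cht \<Phi> \<xi> \<alpha>"
    have "real (R.ninv (w \<circ> refl \<alpha>)) + real nn = real (R.ninv w) + real np"
      using arg_cong[OF dR, of real] by simp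
    then have e1: "real np - real nn = 1 - 2 * h" using qu lenR unfolding h_def by linarith
    have cN: "card N = nn + np" unfolding nn_def np_def by (rule R.card_sign_split[OF gw NPhi])
    have ex: "(\<Sum>\<gamma>\<in>N - {\<alpha>}. \<gamma> \<bullet> coroot \<alpha> - 1) = 2 * h - real (card N) - 1"
      unfolding N_def h_def by (rule R.NN_excess[OF aP])
    have exnn: "(\<Sum>\<gamma>\<in>N - {\<alpha>}. \<gamma> \<bullet> coroot \<alpha> - 1) \<ge> 0"
      by (rule sum_nonneg) (use R.NN_excess_nonneg[OF aP] in \<open>auto simp: N_def\<close>)
    have np0: "np = 0" and ex0: "(\<Sum>\<gamma>\<in>N - {\<alpha>}. \<gamma> \<bullet> coroot \<alpha> - 1) = 0"
      using e1 cN ex exnn by auto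
    have z: "\<gamma> \<bullet> coroot \<alpha> - 1 = 0" if "\<gamma> \<in> N - {\<alpha>}" for \<gamma>
      using sum_nonneg_eq_0_iff[of "N - {\<alpha>}" "\<lambda>\<gamma>. \<gamma> \<bullet> coroot \<alpha> - 1"] ex0 finN that
        R.NN_excess_nonneg[OF aP] by (auto simp: N_def)
    have exb: "(\<Sum>\<gamma>\<in>Nb - {\<alpha>}. \<gamma> \<bullet> coroot \<alpha> - 1) = 2 * cht \<Phi>b \<xi> \<alpha> - real (card Nb) - 1"
      unfolding Nb_def by (rule Rb.NN_excess[OF aPb])
    have "(\<Sum>\<gamma>\<in>Nb - {\<alpha>}. \<gamma> \<bullet> coroot \<alpha> - 1) = 0"
      by (rule sum.neutral) (use z NbN in auto)
    then have cNb: "real (card Nb) = 2 * cht \<Phi>b \<xi> \<alpha> - 1" using exb by simp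
    have "bp \<le> np" unfolding bp_def np_def by (rule card_mono) (use finN NbN in auto)
    then have bp0: "bp = 0" using np0 by simp
    have "card Nb = bn + bp" unfolding bn_def bp_def by (rule R.card_sign_split[OF gw NbPhi])
    then have "Rb.ninv (wb \<circ> refl \<alpha>) + card Nb = Rb.ninv wb" using dRb bp0 by simp
    then have "real (Rb.ninv (wb \<circ> refl \<alpha>)) + real (card Nb) = real (Rb.ninv wb)"
      using arg_cong[of _ _ real] by simp
    then have "real (len \<Phi>b \<xi> (wb \<circ> refl \<alpha>)) = real (len \<Phi>b \<xi> wb) - 2 * cht \<Phi>b \<xi> \<alpha> + 1"
      using lenRb cNb by linarith
    then show ?thesis by simp
  qed
  then show ?thesis unfolding qb_edge_def using assms(9) aPb by blast
qed


end
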